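(* Let $\mathcal{O}=(\{\mathcal{O}(n)\}_{n\ge1},\circ_i,\mathds{1})$ be a nonsymmetric operad of $\mathbf{k}$-modules. For $n\ge1$ put $\mathcal{O}^{\mathrm{comp}}(n):=\mathcal{O}(n)^{\oplus n}$ ($n$ copies), and for $f=(f_1,\dots,f_m)\in\mathcal{O}^{\mathrm{comp}}(m)$, $g=(g_1,\dots,g_n)\in\mathcal{O}^{\mathrm{comp}}(n)$ and $1\le i\le m$ define $f\circ_i^{\mathrm{comp}}g\in\mathcal{O}^{\mathrm{comp}}(m+n-1)$ to be the tuple whose $k$-th component ($1\le k\le m+n-1$) is $\sum_{r+s=k+1,\,1\le r\le m,\,1\le s\le n} f_r\circ_i g_s$. Then $\mathcal{O}^{\mathrm{comp}}=(\{\mathcal{O}^{\mathrm{comp}}(n)\}_{n\ge1},\circ_i^{\mathrm{comp}},\mathds{1})$ (with $\mathds{1}\in\mathcal{O}(1)=\mathcal{O}^{\mathrm{comp}}(1)$) is a nonsymmetric operad. Moreover, an element $\pi=(\pi_1,\pi_2)\in\mathcal{O}^{\mathrm{comp}}(2)$ is a multiplication on $\mathcal{O}^{\mathrm{comp}}$ if and only if $(\pi_1,\pi_2)$ is a compatible multiplication on $\mathcal{O}$.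
   Context: $\mathbf{k}$ is a commutative unital ring of characteristic $0$. A nonsymmetric operad consists of $\mathbf{k}$-modules $\mathcal{O}(n)$, $n\ge1$, bilinear partial compositions $\circ_i:\mathcal{O}(m)\otimes\mathcal{O}(n)\to\mathcal{O}(m+n-1)$ ($1\le i\le m$) and $\mathds{1}\in\mathcal{O}(1)$ such that $(f\circ_i g)\circ_{i+j-1}h=f\circ_i(g\circ_j h)$ for $1\le i\le m$, $1\le j\le n$; $(f\circ_i g)\circ_{j+n-1}h=(f\circ_j h)\circ_i g$ for $1\le i<j\le m$; and $f\circ_i\mathds{1}=\mathds{1}\circ_1 f=f$. A multiplication on an operad $\mathcal{P}$ is $\pi\in\mathcal{P}(2)$ with $\pi\circ_1\pi=\pi\circ_2\pi$. A compatible multiplication on $\mathcal{O}$ is a pair $(\pi_1,\pi_2)$ of multiplications on $\mathcal{O}$ satisfying $\pi_1\circ_1\pi_2+\pi_2\circ_1\pi_1=\pi_1\circ_2\pi_2+\pi_2\circ_2\pi_1$. *)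

theory Defs
  imports Complex_Main "HOL-Library.Function_Algebras"
begin

text \<open>All arities live in one ambient k-module
  (type 'b with scalar multiplication scale over the ring 'a); O(n) is the
  submodule C n. cmp m n i f g is the partial composition f o_i g of f in O(m),
  g in O(n). Axioms are only imposed on the carriers (arities n >= 1).\<close>

definition ns_operad ::
  "('a::comm_ring_1 \<Rightarrow> 'b::ab_group_add \<Rightarrow> 'b) \<Rightarrow> (nat \<Rightarrow> 'b set)
     \<Rightarrow> (nat \<Rightarrow> nat \<Rightarrow> nat \<Rightarrow> 'b \<Rightarrow> 'b \<Rightarrow> 'b) \<Rightarrow> 'b \<Rightarrow> bool" where
  "ns_operad scale C cmp u \<longleftrightarrow>
     module scale \<and>
     (\<forall>n\<ge>1. 0 \<in> C n \<and> (\<forall>x\<in>C n. \<forall>y\<in>C n. x + y \<in> C n) \<and> (\<forall>c. \<forall>x\<in>C n. scale c x \<in> C n)) \<and>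
     u \<in> C 1 \<and>
     (\<forall>m n i f g. 1 \<le> m \<and> 1 \<le> n \<and> 1 \<le> i \<and> i \<le> m \<and> f \<in> C m \<and> g \<in> C n \<longrightarrow>
        cmp m n i f g \<in> C (m + n - 1)) \<and>
     (\<forall>m n i f f' g. 1 \<le> m \<and> 1 \<le> n \<and> 1 \<le> i \<and> i \<le> m \<and> f \<in> C m \<and> f' \<in> C m \<and> g \<in> C n \<longrightarrow>
        cmp m n i (f + f') g = cmp m n i f g + cmp m n i f' g) \<and>
     (\<forall>m n i f g g'. 1 \<le> m \<and> 1 \<le> n \<and> 1 \<le> i \<and> i \<le> m \<and> f \<in> C m \<and> g \<in> C n \<and> g' \<in> C n \<longrightarrow>
        cmp m n i f (g + g') = cmp m n i f g + cmp m n i f g') \<and>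
     (\<forall>m n i c f g. 1 \<le> m \<and> 1 \<le> n \<and> 1 \<le> i \<and> i \<le> m \<and> f \<in> C m \<and> g \<in> C n \<longrightarrow>
        cmp m n i (scale c f) g = scale c (cmp m n i f g) \<and>
        cmp m n i f (scale c g) = scale c (cmp m n i f g)) \<and>
     (\<forall>m n p i j f g h. 1 \<le> m \<and> 1 \<le> n \<and> 1 \<le> p \<and> 1 \<le> i \<and> i \<le> m \<and> 1 \<le> j \<and> j \<le> n \<and>
        f \<in> C m \<and> g \<in> C n \<and> h \<in> C p \<longrightarrow>
        cmp (m + n - 1) p (i + j - 1) (cmp m n i f g) h = cmp m (n + p - 1) i f (cmp n p j g h)) \<and>
     (\<forall>m n p i j f g h. 1 \<le> m \<and> 1 \<le> n \<and> 1 \<le> p \<and> 1 \<le> i \<and> i < j \<and> j \<le> m \<and>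
        f \<in> C m \<and> g \<in> C n \<and> h \<in> C p \<longrightarrow>
        cmp (m + n - 1) p (j + n - 1) (cmp m n i f g) h = cmp (m + p - 1) n i (cmp m p j f h) g) \<and>
     (\<forall>m i f. 1 \<le> m \<and> 1 \<le> i \<and> i \<le> m \<and> f \<in> C m \<longrightarrow> cmp m 1 i f u = f) \<and>
     (\<forall>m f. 1 \<le> m \<and> f \<in> C m \<longrightarrow> cmp 1 m 1 u f = f)"

definition is_multiplication :: "(nat \<Rightarrow> 'b set) \<Rightarrow> (nat \<Rightarrow> nat \<Rightarrow> nat \<Rightarrow> 'b \<Rightarrow> 'b \<Rightarrow> 'b) \<Rightarrow> 'b \<Rightarrow> bool" where
  "is_multiplication C cmp p \<longleftrightarrow> p \<in> C 2 \<and> cmp 2 2 1 p p = cmp 2 2 2 p p"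

definition compatible_multiplication ::
  "(nat \<Rightarrow> 'b::ab_group_add set) \<Rightarrow> (nat \<Rightarrow> nat \<Rightarrow> nat \<Rightarrow> 'b \<Rightarrow> 'b \<Rightarrow> 'b) \<Rightarrow> 'b \<Rightarrow> 'b \<Rightarrow> bool" where
  "compatible_multiplication C cmp p1 p2 \<longleftrightarrow>
     is_multiplication C cmp p1 \<and> is_multiplication C cmp p2 \<and>
     cmp 2 2 1 p1 p2 + cmp 2 2 1 p2 p1 = cmp 2 2 2 p1 p2 + cmp 2 2 2 p2 p1"

text \<open>The operad O^comp. An element of O^comp(n) = O(n)^{(+)n} is a function F :: nat => 'b
  with F k the k-th component (1 <= k <= n), and F k = 0 outside {1..n}.\<close>
definition comp_scale :: "('a \<Rightarrow> 'b \<Rightarrow> 'b) \<Rightarrow> 'a \<Rightarrow> (nat \<Rightarrow> 'b) \<Rightarrow> (nat \<Rightarrow> 'b)" where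
  "comp_scale scale c F = (\<lambda>k. scale c (F k))"

definition comp_carrier :: "(nat \<Rightarrow> 'b::zero set) \<Rightarrow> nat \<Rightarrow> (nat \<Rightarrow> 'b) set" where
  "comp_carrier C n = {F. (\<forall>k\<in>{1..n}. F k \<in> C n) \<and> (\<forall>k. k \<notin> {1..n} \<longrightarrow> F k = 0)}"

definition comp_comp ::
  "(nat \<Rightarrow> nat \<Rightarrow> nat \<Rightarrow> 'b::comm_monoid_add \<Rightarrow> 'b \<Rightarrow> 'b)
     \<Rightarrow> nat \<Rightarrow> nat \<Rightarrow> nat \<Rightarrow> (nat \<Rightarrow> 'b) \<Rightarrow> (nat \<Rightarrow> 'b) \<Rightarrow> (nat \<Rightarrow> 'b)" where
  "comp_comp cmp m n i F G =
     (\<lambda>k. if 1 \<le> k \<and> k \<le> m + n - 1 then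
            (\<Sum>(r, s) \<in> {(r, s). r \<in> {1..m} \<and> s \<in> {1..n} \<and> r + s = k + 1}. cmp m n i (F r) (G s))
          else 0)"

definition comp_unit :: "'b::zero \<Rightarrow> (nat \<Rightarrow> 'b)" where
  "comp_unit u = (\<lambda>k. if k = 1 then u else 0)"

end

theory Submission imports Defs begin

lemma if_sum_in: "(if c then sum f A else 0) = sum (\<lambda>x. if c then f x else 0) A"
  by simp

lemma swap4:
  "(\<Sum>a\<in>A. \<Sum>t\<in>T. \<Sum>r\<in>R. \<Sum>s\<in>S. f a t r s) = (\<Sum>r\<in>R. \<Sum>s\<in>S. \<Sum>t\<in>T. \<Sum>a\<in>A. f a t r s)"
proof -
  have "(\<Sum>a\<in>A. \<Sum>t\<in>T. \<Sum>r\<in>R. \<Sum>s\<in>S. f a t r s) = (\<Sum>a\<in>A. \<Sum>r\<in>R. \<Sum>t\<in>T. \<Sum>s\<in>S. f a t r s)"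
    by (intro sum.cong refl) (rule sum.swap)
  also have "\<dots> = (\<Sum>r\<in>R. \<Sum>a\<in>A. \<Sum>t\<in>T. \<Sum>s\<in>S. f a t r s)" by (rule sum.swap)
  also have "\<dots> = (\<Sum>r\<in>R. \<Sum>a\<in>A. \<Sum>s\<in>S. \<Sum>t\<in>T. f a t r s)"
    by (intro sum.cong refl) (rule sum.swap)
  also have "\<dots> = (\<Sum>r\<in>R. \<Sum>s\<in>S. \<Sum>a\<in>A. \<Sum>t\<in>T. f a t r s)"
    by (intro sum.cong refl) (rule sum.swap)
  also have "\<dots> = (\<Sum>r\<in>R. \<Sum>s\<in>S. \<Sum>t\<in>T. \<Sum>a\<in>A. f a t r s)"
    by (intro sum.cong refl) (rule sum.swap)
  finally show ?thesis .
qed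

lemma swap3:
  "(\<Sum>b\<in>B. \<Sum>s\<in>S. \<Sum>t\<in>T. f b s t) = (\<Sum>s\<in>S. \<Sum>t\<in>T. \<Sum>b\<in>B. f b s t)"
proof -
  have "(\<Sum>b\<in>B. \<Sum>s\<in>S. \<Sum>t\<in>T. f b s t) = (\<Sum>s\<in>S. \<Sum>b\<in>B. \<Sum>t\<in>T. f b s t)" by (rule sum.swap)
  also have "\<dots> = (\<Sum>s\<in>S. \<Sum>t\<in>T. \<Sum>b\<in>B. f b s t)"
    by (intro sum.cong refl) (rule sum.swap)
  finally show ?thesis .
qed

lemma nestL:
  fixes Y :: "nat \<Rightarrow> nat \<Rightarrow> nat \<Rightarrow> 'b::comm_monoid_add"
  assumes "1 \<le> m" "1 \<le> n"
  shows "(\<Sum>a=1..m+n-1. \<Sum>t=1..p. if a+t=k+1 then (\<Sum>r=1..m. \<Sum>s=1..n. if r+s=a+1 then Y r s t else 0) else 0)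
       = (\<Sum>r=1..m. \<Sum>s=1..n. \<Sum>t=1..p. if r+s+t=k+2 then Y r s t else 0)"
proof -
  have "(\<Sum>a=1..m+n-1. \<Sum>t=1..p. if a+t=k+1 then (\<Sum>r=1..m. \<Sum>s=1..n. if r+s=a+1 then Y r s t else 0) else 0)
      = (\<Sum>a=1..m+n-1. \<Sum>t=1..p. \<Sum>r=1..m. \<Sum>s=1..n. if a+t=k+1 \<and> r+s=a+1 then Y r s t else 0)"
    by (auto simp: if_sum_in intro!: sum.cong)
  also have "\<dots> = (\<Sum>r=1..m. \<Sum>s=1..n. \<Sum>t=1..p. \<Sum>a=1..m+n-1. if a+t=k+1 \<and> r+s=a+1 then Y r s t else 0)"
    by (rule swap4)
  also have "\<dots> = (\<Sum>r=1..m. \<Sum>s=1..n. \<Sum>t=1..p. if r+s+t=k+2 then Y r s t else 0)"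
  proof (intro sum.cong refl)
    fix r s t assume r: "r \<in> {1..m}" and s: "s \<in> {1..n}"
    have "(\<Sum>a=1..m+n-1. if a+t=k+1 \<and> r+s=a+1 then Y r s t else 0)
        = (\<Sum>a=1..m+n-1. if a = r+s-1 then (if r+s+t=k+2 then Y r s t else 0) else 0)"
      using r s by (intro sum.cong refl) auto
    also have "\<dots> = (if r+s+t=k+2 then Y r s t else 0)"
      using r s by (simp add: sum.delta) (auto; arith)
    finally show "(\<Sum>a=1..m+n-1. if a+t=k+1 \<and> r+s=a+1 then Y r s t else 0) = (if r+s+t=k+2 then Y r s t else 0)" .
  qed
  finally show ?thesis .
qed

lemma nestR:
  fixes Y :: "nat \<Rightarrow> nat \<Rightarrow> nat \<Rightarrow> 'b::comm_monoid_add"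
  assumes "1 \<le> n" "1 \<le> p"
  shows "(\<Sum>r=1..m. \<Sum>b=1..n+p-1. if r+b=k+1 then (\<Sum>s=1..n. \<Sum>t=1..p. if s+t=b+1 then Y r s t else 0) else 0)
       = (\<Sum>r=1..m. \<Sum>s=1..n. \<Sum>t=1..p. if r+s+t=k+2 then Y r s t else 0)"
proof (rule sum.cong[OF refl])
  fix r assume r: "r \<in> {1..m}"
  have "(\<Sum>b=1..n+p-1. if r+b=k+1 then (\<Sum>s=1..n. \<Sum>t=1..p. if s+t=b+1 then Y r s t else 0) else 0)
      = (\<Sum>b=1..n+p-1. \<Sum>s=1..n. \<Sum>t=1..p. if r+b=k+1 \<and> s+t=b+1 then Y r s t else 0)"
    by (auto simp: if_sum_in intro!: sum.cong)
  also have "\<dots> = (\<Sum>s=1..n. \<Sum>t=1..p. \<Sum>b=1..n+p-1. if r+b=k+1 \<and> s+t=b+1 then Y r s t else 0)"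
    by (rule swap3)
  also have "\<dots> = (\<Sum>s=1..n. \<Sum>t=1..p. if r+s+t=k+2 then Y r s t else 0)"
  proof (intro sum.cong refl)
    fix s t assume s: "s \<in> {1..n}" and t: "t \<in> {1..p}"
    have "(\<Sum>b=1..n+p-1. if r+b=k+1 \<and> s+t=b+1 then Y r s t else 0)
        = (\<Sum>b=1..n+p-1. if b = s+t-1 then (if r+s+t=k+2 then Y r s t else 0) else 0)"
      using s t by (intro sum.cong refl) auto
    also have "\<dots> = (if r+s+t=k+2 then Y r s t else 0)"
      using s t by (simp add: sum.delta) (auto; arith)
    finally show "(\<Sum>b=1..n+p-1. if r+b=k+1 \<and> s+t=b+1 then Y r s t else 0) = (if r+s+t=k+2 then Y r s t else 0)" .
  qed
  finally show "(\<Sum>b=1..n+p-1. if r+b=k+1 then (\<Sum>s=1..n. \<Sum>t=1..p. if s+t=b+1 then Y r s t else 0) else 0) = (\<Sum>s=1..n. \<Sum>t=1..p. if r+s+t=k+2 then Y r s t else 0)" .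
qed

lemma comp_comp_eq:
  "comp_comp cmp m n i F G k = (\<Sum>r=1..m. \<Sum>s=1..n. if r+s=k+1 then cmp m n i (F r) (G s) else 0)"
proof (cases "1 \<le> k \<and> k \<le> m + n - 1")
  case True
  have "{(r, s). r \<in> {1..m} \<and> s \<in> {1..n} \<and> r + s = k + 1} = {x \<in> {1..m} \<times> {1..n}. fst x + snd x = k + 1}"
    by auto
  then have "comp_comp cmp m n i F G k = (\<Sum>x\<in>{1..m} \<times> {1..n}. if fst x + snd x = k + 1 then cmp m n i (F (fst x)) (G (snd x)) else 0)"
    using True unfolding comp_comp_def by (simp add: sum.inter_filter case_prod_beta)
  also have "\<dots> = (\<Sum>r=1..m. \<Sum>s=1..n. if r+s=k+1 then cmp m n i (F r) (G s) else 0)"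
    by (simp add: sum.cartesian_product case_prod_beta)
  finally show ?thesis .
next
  case False
  then have "comp_comp cmp m n i F G k = 0" unfolding comp_comp_def by auto
  moreover have "(\<Sum>r=1..m. \<Sum>s=1..n. if r+s=k+1 then cmp m n i (F r) (G s) else 0) = 0"
    using False by (intro sum.neutral ballI) auto
  ultimately show ?thesis by simp
qed

context
  fixes scale :: "'a::comm_ring_1 \<Rightarrow> 'b::ab_group_add \<Rightarrow> 'b"
    and C :: "nat \<Rightarrow> 'b set"
    and cmp :: "nat \<Rightarrow> nat \<Rightarrow> nat \<Rightarrow> 'b \<Rightarrow> 'b \<Rightarrow> 'b"
    and u :: 'b
  assumes op: "ns_operad scale C cmp u"
begin

lemma md: "module scale" using op unfolding ns_operad_def by (elim conjE) assumption
lemma ax2: "\<forall>n\<ge>1. 0 \<in> C n \<and> (\<forall>x\<in>C n. \<forall>y\<in>C n. x + y \<in> C n) \<and> (\<forall>c. \<forall>x\<in>C n. scale c x \<in> C n)"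
  using op unfolding ns_operad_def by (elim conjE) assumption
lemma uC: "u \<in> C 1" using op unfolding ns_operad_def by (elim conjE) assumption
lemma ax4: "\<forall>m n i f g. 1 \<le> m \<and> 1 \<le> n \<and> 1 \<le> i \<and> i \<le> m \<and> f \<in> C m \<and> g \<in> C n \<longrightarrow>
        cmp m n i f g \<in> C (m + n - 1)" using op unfolding ns_operad_def by (elim conjE) assumption
lemma ax5: "\<forall>m n i f f' g. 1 \<le> m \<and> 1 \<le> n \<and> 1 \<le> i \<and> i \<le> m \<and> f \<in> C m \<and> f' \<in> C m \<and> g \<in> C n \<longrightarrow>
        cmp m n i (f + f') g = cmp m n i f g + cmp m n i f' g" using op unfolding ns_operad_def by (elim conjE) assumption
lemma ax6: "\<forall>m n i f g g'. 1 \<le> m \<and> 1 \<le> n \<and> 1 \<le> i \<and> i \<le> m \<and> f \<in> C m \<and> g \<in> C n \<and> g' \<in> C n \<longrightarrow>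
        cmp m n i f (g + g') = cmp m n i f g + cmp m n i f g'" using op unfolding ns_operad_def by (elim conjE) assumption
lemma ax7: "\<forall>m n i c f g. 1 \<le> m \<and> 1 \<le> n \<and> 1 \<le> i \<and> i \<le> m \<and> f \<in> C m \<and> g \<in> C n \<longrightarrow>
        cmp m n i (scale c f) g = scale c (cmp m n i f g) \<and>
        cmp m n i f (scale c g) = scale c (cmp m n i f g)" using op unfolding ns_operad_def by (elim conjE) assumption
lemma ax8: "\<forall>m n p i j f g h. 1 \<le> m \<and> 1 \<le> n \<and> 1 \<le> p \<and> 1 \<le> i \<and> i \<le> m \<and> 1 \<le> j \<and> j \<le> n \<and>
        f \<in> C m \<and> g \<in> C n \<and> h \<in> C p \<longrightarrow>
        cmp (m + n - 1) p (i + j - 1) (cmp m n i f g) h = cmp m (n + p - 1) i f (cmp n p j g h)"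
  using op unfolding ns_operad_def by (elim conjE) assumption
lemma ax9: "\<forall>m n p i j f g h. 1 \<le> m \<and> 1 \<le> n \<and> 1 \<le> p \<and> 1 \<le> i \<and> i < j \<and> j \<le> m \<and>
        f \<in> C m \<and> g \<in> C n \<and> h \<in> C p \<longrightarrow>
        cmp (m + n - 1) p (j + n - 1) (cmp m n i f g) h = cmp (m + p - 1) n i (cmp m p j f h) g"
  using op unfolding ns_operad_def by (elim conjE) assumption
lemma ax10: "\<forall>m i f. 1 \<le> m \<and> 1 \<le> i \<and> i \<le> m \<and> f \<in> C m \<longrightarrow> cmp m 1 i f u = f"
  using op unfolding ns_operad_def by (elim conjE) assumption
lemma ax11: "\<forall>m f. 1 \<le> m \<and> f \<in> C m \<longrightarrow> cmp 1 m 1 u f = f"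
  using op unfolding ns_operad_def by (elim conjE) assumption

lemma zeroC: "1 \<le> n \<Longrightarrow> 0 \<in> C n" using ax2 by blast
lemma addC: "1 \<le> n \<Longrightarrow> x \<in> C n \<Longrightarrow> y \<in> C n \<Longrightarrow> x + y \<in> C n" using ax2 by blast
lemma scC: "1 \<le> n \<Longrightarrow> x \<in> C n \<Longrightarrow> scale c x \<in> C n" using ax2 by blast
lemma cmpC: "1 \<le> m \<Longrightarrow> 1 \<le> n \<Longrightarrow> 1 \<le> i \<Longrightarrow> i \<le> m \<Longrightarrow> f \<in> C m \<Longrightarrow> g \<in> C n \<Longrightarrow>
        cmp m n i f g \<in> C (m + n - 1)" using ax4 by blast
lemma addL: "1 \<le> m \<Longrightarrow> 1 \<le> n \<Longrightarrow> 1 \<le> i \<Longrightarrow> i \<le> m \<Longrightarrow> f \<in> C m \<Longrightarrow> f' \<in> C m \<Longrightarrow> g \<in> C n \<Longrightarrow>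
        cmp m n i (f + f') g = cmp m n i f g + cmp m n i f' g" using ax5 by blast
lemma addR: "1 \<le> m \<Longrightarrow> 1 \<le> n \<Longrightarrow> 1 \<le> i \<Longrightarrow> i \<le> m \<Longrightarrow> f \<in> C m \<Longrightarrow> g \<in> C n \<Longrightarrow> g' \<in> C n \<Longrightarrow>
        cmp m n i f (g + g') = cmp m n i f g + cmp m n i f g'" using ax6 by blast
lemma scL: "1 \<le> m \<Longrightarrow> 1 \<le> n \<Longrightarrow> 1 \<le> i \<Longrightarrow> i \<le> m \<Longrightarrow> f \<in> C m \<Longrightarrow> g \<in> C n \<Longrightarrow>
        cmp m n i (scale c f) g = scale c (cmp m n i f g)" using ax7 by blast
lemma scR: "1 \<le> m \<Longrightarrow> 1 \<le> n \<Longrightarrow> 1 \<le> i \<Longrightarrow> i \<le> m \<Longrightarrow> f \<in> C m \<Longrightarrow> g \<in> C n \<Longrightarrow>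
        cmp m n i f (scale c g) = scale c (cmp m n i f g)" using ax7 by blast
lemma assoc: "1 \<le> m \<Longrightarrow> 1 \<le> n \<Longrightarrow> 1 \<le> p \<Longrightarrow> 1 \<le> i \<Longrightarrow> i \<le> m \<Longrightarrow> 1 \<le> j \<Longrightarrow> j \<le> n \<Longrightarrow>
        f \<in> C m \<Longrightarrow> g \<in> C n \<Longrightarrow> h \<in> C p \<Longrightarrow>
        cmp (m + n - 1) p (i + j - 1) (cmp m n i f g) h = cmp m (n + p - 1) i f (cmp n p j g h)"
  using ax8 by blast
lemma comm: "1 \<le> m \<Longrightarrow> 1 \<le> n \<Longrightarrow> 1 \<le> p \<Longrightarrow> 1 \<le> i \<Longrightarrow> i < j \<Longrightarrow> j \<le> m \<Longrightarrow>
        f \<in> C m \<Longrightarrow> g \<in> C n \<Longrightarrow> h \<in> C p \<Longrightarrow>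
        cmp (m + n - 1) p (j + n - 1) (cmp m n i f g) h = cmp (m + p - 1) n i (cmp m p j f h) g"
  using ax9 by blast
lemma unitR: "1 \<le> m \<Longrightarrow> 1 \<le> i \<Longrightarrow> i \<le> m \<Longrightarrow> f \<in> C m \<Longrightarrow> cmp m 1 i f u = f"
  using ax10 by blast
lemma unitL: "1 \<le> m \<Longrightarrow> f \<in> C m \<Longrightarrow> cmp 1 m 1 u f = f"
  using ax11 by blast

lemma sumC: "1 \<le> n \<Longrightarrow> (\<And>x. x \<in> A \<Longrightarrow> g x \<in> C n) \<Longrightarrow> sum g A \<in> C n"
proof (induction A rule: infinite_finite_induct)
  case (infinite A) then show ?case by (simp add: zeroC)
next
  case empty then show ?case by (simp add: zeroC)
next
  case (insert x F) then show ?case by (simp add: addC)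
qed

lemma ifC: "1 \<le> n \<Longrightarrow> (c \<Longrightarrow> x \<in> C n) \<Longrightarrow> (if c then x else 0) \<in> C n"
  by (simp add: zeroC)

lemma cmp0L: assumes "1 \<le> m" "1 \<le> n" "1 \<le> i" "i \<le> m" "g \<in> C n" shows "cmp m n i 0 g = 0"
proof -
  have "cmp m n i (0 + 0) g = cmp m n i 0 g + cmp m n i 0 g"
    using assms by (intro addL) (auto simp: zeroC)
  then show ?thesis by simp
qed

lemma cmp0R: assumes "1 \<le> m" "1 \<le> n" "1 \<le> i" "i \<le> m" "f \<in> C m" shows "cmp m n i f 0 = 0"
proof -
  have "cmp m n i f (0 + 0) = cmp m n i f 0 + cmp m n i f 0"
    using assms by (intro addR) (auto simp: zeroC)
  then show ?thesis by simp
qed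

lemma cmp_sumL: "1 \<le> m \<Longrightarrow> 1 \<le> n \<Longrightarrow> 1 \<le> i \<Longrightarrow> i \<le> m \<Longrightarrow> h \<in> C n \<Longrightarrow>
   (\<And>x. x \<in> A \<Longrightarrow> g x \<in> C m) \<Longrightarrow> cmp m n i (sum g A) h = (\<Sum>x\<in>A. cmp m n i (g x) h)"
proof (induction A rule: infinite_finite_induct)
  case (infinite A) then show ?case by (simp add: cmp0L)
next
  case empty then show ?case by (simp add: cmp0L)
next
  case (insert x F) then show ?case by (simp add: addL sumC)
qed

lemma cmp_sumR: "1 \<le> m \<Longrightarrow> 1 \<le> n \<Longrightarrow> 1 \<le> i \<Longrightarrow> i \<le> m \<Longrightarrow> f \<in> C m \<Longrightarrow>
   (\<And>x. x \<in> A \<Longrightarrow> g x \<in> C n) \<Longrightarrow> cmp m n i f (sum g A) = (\<Sum>x\<in>A. cmp m n i f (g x))"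
proof (induction A rule: infinite_finite_induct)
  case (infinite A) then show ?case by (simp add: cmp0R)
next
  case empty then show ?case by (simp add: cmp0R)
next
  case (insert x F) then show ?case by (simp add: addR sumC)
qed

lemma carrierD: "F \<in> comp_carrier C n \<Longrightarrow> k \<in> {1..n} \<Longrightarrow> F k \<in> C n"
  unfolding comp_carrier_def by blast
lemma carrierD0: "F \<in> comp_carrier C n \<Longrightarrow> k \<notin> {1..n} \<Longrightarrow> F k = 0"
  unfolding comp_carrier_def by blast

lemma pushL:
  assumes m: "1 \<le> m" and n: "1 \<le> n" and i: "1 \<le> i" "i \<le> m" and p: "1 \<le> p"
    and I: "1 \<le> I" "I \<le> m + n - 1" and F: "F \<in> comp_carrier C m" and G: "G \<in> comp_carrier C n"
    and h: "h \<in> C p"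
  shows "cmp (m+n-1) p I (comp_comp cmp m n i F G a) h =
     (\<Sum>r=1..m. \<Sum>s=1..n. if r+s=a+1 then cmp (m+n-1) p I (cmp m n i (F r) (G s)) h else 0)"
proof -
  have M: "1 \<le> m + n - 1" using m n by simp
  have mem: "cmp m n i (F r) (G s) \<in> C (m+n-1)" if "r \<in> {1..m}" "s \<in> {1..n}" for r s
    using that m n i F G by (intro cmpC) (auto intro: carrierD)
  have "cmp (m+n-1) p I (comp_comp cmp m n i F G a) h =
     (\<Sum>r=1..m. cmp (m+n-1) p I (\<Sum>s=1..n. if r+s=a+1 then cmp m n i (F r) (G s) else 0) h)"
    unfolding comp_comp_eq using M p I h mem
    by (intro cmp_sumL sumC ifC) auto
  also have "\<dots> = (\<Sum>r=1..m. \<Sum>s=1..n. cmp (m+n-1) p I (if r+s=a+1 then cmp m n i (F r) (G s) else 0) h)"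
    using M p I h mem by (intro sum.cong refl cmp_sumL ifC) auto
  also have "\<dots> = (\<Sum>r=1..m. \<Sum>s=1..n. if r+s=a+1 then cmp (m+n-1) p I (cmp m n i (F r) (G s)) h else 0)"
    using M p I h by (intro sum.cong refl) (simp add: cmp0L)
  finally show ?thesis .
qed

lemma pushR:
  assumes m: "1 \<le> m" and n: "1 \<le> n" and p: "1 \<le> p" and i: "1 \<le> i" "i \<le> m" and j: "1 \<le> j" "j \<le> n"
    and f: "f \<in> C m" and G: "G \<in> comp_carrier C n" and H: "H \<in> comp_carrier C p"
  shows "cmp m (n+p-1) i f (comp_comp cmp n p j G H b) =
     (\<Sum>s=1..n. \<Sum>t=1..p. if s+t=b+1 then cmp m (n+p-1) i f (cmp n p j (G s) (H t)) else 0)"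
proof -
  have N: "1 \<le> n + p - 1" using n p by simp
  have mem: "cmp n p j (G s) (H t) \<in> C (n+p-1)" if "s \<in> {1..n}" "t \<in> {1..p}" for s t
    using that n p j G H by (intro cmpC) (auto intro: carrierD)
  have "cmp m (n+p-1) i f (comp_comp cmp n p j G H b) =
     (\<Sum>s=1..n. cmp m (n+p-1) i f (\<Sum>t=1..p. if s+t=b+1 then cmp n p j (G s) (H t) else 0))"
    unfolding comp_comp_eq using N m i f mem
    by (intro cmp_sumR sumC ifC) auto
  also have "\<dots> = (\<Sum>s=1..n. \<Sum>t=1..p. cmp m (n+p-1) i f (if s+t=b+1 then cmp n p j (G s) (H t) else 0))"
    using N m i f mem by (intro sum.cong refl cmp_sumR ifC) auto
  also have "\<dots> = (\<Sum>s=1..n. \<Sum>t=1..p. if s+t=b+1 then cmp m (n+p-1) i f (cmp n p j (G s) (H t)) else 0)"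
    using N m i f by (intro sum.cong refl) (simp add: cmp0R)
  finally show ?thesis .
qed

lemma assoc_comp:
  assumes m: "1 \<le> m" and n: "1 \<le> n" and p: "1 \<le> p" and i: "1 \<le> i" "i \<le> m" and j: "1 \<le> j" "j \<le> n"
    and F: "F \<in> comp_carrier C m" and G: "G \<in> comp_carrier C n" and H: "H \<in> comp_carrier C p"
  shows "comp_comp cmp (m + n - 1) p (i + j - 1) (comp_comp cmp m n i F G) H =
         comp_comp cmp m (n + p - 1) i F (comp_comp cmp n p j G H)"
proof (rule ext)
  fix k
  have "comp_comp cmp (m + n - 1) p (i + j - 1) (comp_comp cmp m n i F G) H k
      = (\<Sum>a=1..m+n-1. \<Sum>t=1..p. if a+t=k+1 then cmp (m+n-1) p (i+j-1) (comp_comp cmp m n i F G a) (H t) else 0)"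
    by (rule comp_comp_eq)
  also have "\<dots> = (\<Sum>a=1..m+n-1. \<Sum>t=1..p. if a+t=k+1 then
        (\<Sum>r=1..m. \<Sum>s=1..n. if r+s=a+1 then cmp (m+n-1) p (i+j-1) (cmp m n i (F r) (G s)) (H t) else 0) else 0)"
    using m n p i j F G H by (intro sum.cong refl if_cong pushL) (auto intro: carrierD)
  also have "\<dots> = (\<Sum>r=1..m. \<Sum>s=1..n. \<Sum>t=1..p. if r+s+t=k+2 then cmp (m+n-1) p (i+j-1) (cmp m n i (F r) (G s)) (H t) else 0)"
    using m n by (rule nestL)
  also have "\<dots> = (\<Sum>r=1..m. \<Sum>s=1..n. \<Sum>t=1..p. if r+s+t=k+2 then cmp m (n+p-1) i (F r) (cmp n p j (G s) (H t)) else 0)"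
    using m n p i j F G H by (intro sum.cong refl if_cong assoc) (auto intro: carrierD)
  also have "\<dots> = (\<Sum>r=1..m. \<Sum>b=1..n+p-1. if r+b=k+1 then
        (\<Sum>s=1..n. \<Sum>t=1..p. if s+t=b+1 then cmp m (n+p-1) i (F r) (cmp n p j (G s) (H t)) else 0) else 0)"
    using n p by (rule nestR[symmetric])
  also have "\<dots> = (\<Sum>r=1..m. \<Sum>b=1..n+p-1. if r+b=k+1 then cmp m (n+p-1) i (F r) (comp_comp cmp n p j G H b) else 0)"
    using m n p i j F G H by (intro sum.cong refl if_cong pushR[symmetric]) (auto intro: carrierD)
  also have "\<dots> = comp_comp cmp m (n + p - 1) i F (comp_comp cmp n p j G H) k"
    by (rule comp_comp_eq[symmetric])
  finally show "comp_comp cmp (m + n - 1) p (i + j - 1) (comp_comp cmp m n i F G) H k =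
         comp_comp cmp m (n + p - 1) i F (comp_comp cmp n p j G H) k" .
qed

lemma comm_comp:
  assumes m: "1 \<le> m" and n: "1 \<le> n" and p: "1 \<le> p" and i: "1 \<le> i" "i < j" "j \<le> m"
    and F: "F \<in> comp_carrier C m" and G: "G \<in> comp_carrier C n" and H: "H \<in> comp_carrier C p"
  shows "comp_comp cmp (m + n - 1) p (j + n - 1) (comp_comp cmp m n i F G) H =
         comp_comp cmp (m + p - 1) n i (comp_comp cmp m p j F H) G"
proof (rule ext)
  fix k
  have "comp_comp cmp (m + n - 1) p (j + n - 1) (comp_comp cmp m n i F G) H k
      = (\<Sum>a=1..m+n-1. \<Sum>t=1..p. if a+t=k+1 then cmp (m+n-1) p (j+n-1) (comp_comp cmp m n i F G a) (H t) else 0)"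
    by (rule comp_comp_eq)
  also have "\<dots> = (\<Sum>a=1..m+n-1. \<Sum>t=1..p. if a+t=k+1 then
        (\<Sum>r=1..m. \<Sum>s=1..n. if r+s=a+1 then cmp (m+n-1) p (j+n-1) (cmp m n i (F r) (G s)) (H t) else 0) else 0)"
    using m n p i F G H by (intro sum.cong refl if_cong pushL) (auto intro: carrierD)
  also have "\<dots> = (\<Sum>r=1..m. \<Sum>s=1..n. \<Sum>t=1..p. if r+s+t=k+2 then cmp (m+n-1) p (j+n-1) (cmp m n i (F r) (G s)) (H t) else 0)"
    using m n by (rule nestL)
  also have "\<dots> = (\<Sum>r=1..m. \<Sum>s=1..n. \<Sum>t=1..p. if r+s+t=k+2 then cmp (m+p-1) n i (cmp m p j (F r) (H t)) (G s) else 0)"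
    using m n p i F G H by (intro sum.cong refl if_cong comm) (auto intro: carrierD)
  also have "\<dots> = (\<Sum>r=1..m. \<Sum>t=1..p. \<Sum>s=1..n. if r+t+s=k+2 then cmp (m+p-1) n i (cmp m p j (F r) (H t)) (G s) else 0)"
    by (rule sum.cong[OF refl], subst sum.swap) (simp add: ac_simps)
  also have "\<dots> = (\<Sum>a=1..m+p-1. \<Sum>s=1..n. if a+s=k+1 then
        (\<Sum>r=1..m. \<Sum>t=1..p. if r+t=a+1 then cmp (m+p-1) n i (cmp m p j (F r) (H t)) (G s) else 0) else 0)"
    using m p by (rule nestL[symmetric])
  also have "\<dots> = (\<Sum>a=1..m+p-1. \<Sum>s=1..n. if a+s=k+1 then cmp (m+p-1) n i (comp_comp cmp m p j F H a) (G s) else 0)"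
    using m n p i F G H by (intro sum.cong refl if_cong pushL[symmetric]) (auto intro: carrierD)
  also have "\<dots> = comp_comp cmp (m + p - 1) n i (comp_comp cmp m p j F H) G k"
    by (rule comp_comp_eq[symmetric])
  finally show "comp_comp cmp (m + n - 1) p (j + n - 1) (comp_comp cmp m n i F G) H k =
         comp_comp cmp (m + p - 1) n i (comp_comp cmp m p j F H) G k" .
qed

lemma unitR_comp:
  assumes "1 \<le> m" "1 \<le> i" "i \<le> m" "F \<in> comp_carrier C m"
  shows "comp_comp cmp m 1 i F (comp_unit u) = F"
proof (rule ext)
  fix k
  have "comp_comp cmp m 1 i F (comp_unit u) k = (\<Sum>r=1..m. if r = k then F r else 0)"
    unfolding comp_comp_eq using assms
    by (intro sum.cong refl) (auto simp: comp_unit_def unitR[unfolded One_nat_def] carrierD)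
  also have "\<dots> = F k" using assms by (auto simp: sum.delta carrierD0)
  finally show "comp_comp cmp m 1 i F (comp_unit u) k = F k" .
qed

lemma unitL_comp:
  assumes "1 \<le> m" "G \<in> comp_carrier C m"
  shows "comp_comp cmp 1 m 1 (comp_unit u) G = G"
proof (rule ext)
  fix k
  have "comp_comp cmp 1 m 1 (comp_unit u) G k = (\<Sum>s=1..m. if 1+s=k+1 then cmp 1 m 1 u (G s) else 0)"
    by (simp add: comp_comp_eq comp_unit_def)
  also have "\<dots> = (\<Sum>s=1..m. if s = k then G s else 0)"
    using assms by (intro sum.cong refl) (auto simp: unitL[unfolded One_nat_def] carrierD)
  also have "\<dots> = G k" using assms by (auto simp: sum.delta carrierD0)
  finally show "comp_comp cmp 1 m 1 (comp_unit u) G k = G k" .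
qed

lemma addL_comp:
  assumes "1 \<le> m" "1 \<le> n" "1 \<le> i" "i \<le> m" "F \<in> comp_carrier C m" "F' \<in> comp_carrier C m" "G \<in> comp_carrier C n"
  shows "comp_comp cmp m n i (F + F') G = comp_comp cmp m n i F G + comp_comp cmp m n i F' G"
proof (rule ext)
  fix k
  have "comp_comp cmp m n i (F + F') G k = (\<Sum>r=1..m. \<Sum>s=1..n.
      (if r+s=k+1 then cmp m n i (F r) (G s) else 0) + (if r+s=k+1 then cmp m n i (F' r) (G s) else 0))"
    unfolding comp_comp_eq using assms by (intro sum.cong refl) (simp add: addL carrierD)
  then show "comp_comp cmp m n i (F + F') G k = (comp_comp cmp m n i F G + comp_comp cmp m n i F' G) k"
    by (simp add: sum.distrib comp_comp_eq)
qed

lemma addR_comp: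
  assumes "1 \<le> m" "1 \<le> n" "1 \<le> i" "i \<le> m" "F \<in> comp_carrier C m" "G \<in> comp_carrier C n" "G' \<in> comp_carrier C n"
  shows "comp_comp cmp m n i F (G + G') = comp_comp cmp m n i F G + comp_comp cmp m n i F G'"
proof (rule ext)
  fix k
  have "comp_comp cmp m n i F (G + G') k = (\<Sum>r=1..m. \<Sum>s=1..n.
      (if r+s=k+1 then cmp m n i (F r) (G s) else 0) + (if r+s=k+1 then cmp m n i (F r) (G' s) else 0))"
    unfolding comp_comp_eq using assms by (intro sum.cong refl) (simp add: addR carrierD)
  then show "comp_comp cmp m n i F (G + G') k = (comp_comp cmp m n i F G + comp_comp cmp m n i F G') k"
    by (simp add: sum.distrib comp_comp_eq)
qed

lemma scL_comp:
  assumes "1 \<le> m" "1 \<le> n" "1 \<le> i" "i \<le> m" "F \<in> comp_carrier C m" "G \<in> comp_carrier C n"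
  shows "comp_comp cmp m n i (comp_scale scale c F) G = comp_scale scale c (comp_comp cmp m n i F G)"
proof (rule ext)
  fix k
  have "comp_comp cmp m n i (comp_scale scale c F) G k = (\<Sum>r=1..m. \<Sum>s=1..n.
      scale c (if r+s=k+1 then cmp m n i (F r) (G s) else 0))"
    unfolding comp_comp_eq comp_scale_def using assms md
    by (intro sum.cong refl) (simp add: scL carrierD module.scale_zero_right)
  then show "comp_comp cmp m n i (comp_scale scale c F) G k = comp_scale scale c (comp_comp cmp m n i F G) k"
    by (simp add: comp_comp_eq comp_scale_def module.scale_sum_right[OF md])
qed

lemma scR_comp:
  assumes "1 \<le> m" "1 \<le> n" "1 \<le> i" "i \<le> m" "F \<in> comp_carrier C m" "G \<in> comp_carrier C n"
  shows "comp_comp cmp m n i F (comp_scale scale c G) = comp_scale scale c (comp_comp cmp m n i F G)"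
proof (rule ext)
  fix k
  have "comp_comp cmp m n i F (comp_scale scale c G) k = (\<Sum>r=1..m. \<Sum>s=1..n.
      scale c (if r+s=k+1 then cmp m n i (F r) (G s) else 0))"
    unfolding comp_comp_eq comp_scale_def using assms md
    by (intro sum.cong refl) (simp add: scR carrierD module.scale_zero_right)
  then show "comp_comp cmp m n i F (comp_scale scale c G) k = comp_scale scale c (comp_comp cmp m n i F G) k"
    by (simp add: comp_comp_eq comp_scale_def module.scale_sum_right[OF md])
qed

lemma closed_comp:
  assumes "1 \<le> m" "1 \<le> n" "1 \<le> i" "i \<le> m" "F \<in> comp_carrier C m" "G \<in> comp_carrier C n"
  shows "comp_comp cmp m n i F G \<in> comp_carrier C (m + n - 1)"
  unfolding comp_carrier_def
proof (intro CollectI conjI ballI allI impI)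
  fix k assume "k \<in> {1..m + n - 1}"
  show "comp_comp cmp m n i F G k \<in> C (m + n - 1)"
    unfolding comp_comp_eq using assms
    by (intro sumC ifC cmpC) (auto intro: carrierD)
next
  fix k :: nat assume "k \<notin> {1..m + n - 1}"
  then show "comp_comp cmp m n i F G k = 0" unfolding comp_comp_def by auto
qed

lemma cmod: "module (comp_scale scale)"
  using md unfolding module_def comp_scale_def by (auto simp: fun_eq_iff)

lemma ccarrier: "\<forall>n\<ge>1. 0 \<in> comp_carrier C n \<and> (\<forall>x\<in>comp_carrier C n. \<forall>y\<in>comp_carrier C n. x + y \<in> comp_carrier C n)
   \<and> (\<forall>c. \<forall>x\<in>comp_carrier C n. comp_scale scale c x \<in> comp_carrier C n)"
  unfolding comp_carrier_def comp_scale_def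
  by (auto simp: zeroC addC scC module.scale_zero_right[OF md])

lemma cunit: "comp_unit u \<in> comp_carrier C 1"
  unfolding comp_carrier_def comp_unit_def using uC by auto

lemma part1: "ns_operad (comp_scale scale) (comp_carrier C) (comp_comp cmp) (comp_unit u)"
  unfolding ns_operad_def
  apply (intro conjI)
  subgoal by (rule cmod)
  subgoal by (rule ccarrier)
  subgoal by (rule cunit)
  subgoal by (blast intro: closed_comp)
  subgoal by (blast intro: addL_comp)
  subgoal by (blast intro: addR_comp)
  subgoal by (blast intro: scL_comp scR_comp)
  subgoal by (blast intro: assoc_comp)
  subgoal by (blast intro: comm_comp)
  subgoal by (blast intro: unitR_comp)
  subgoal by (blast intro: unitL_comp)
  done

lemma comp22:
  "comp_comp cmp 2 2 i P P k = (if k = 1 then cmp 2 2 i (P 1) (P 1)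
     else if k = 2 then cmp 2 2 i (P 1) (P 2) + cmp 2 2 i (P 2) (P 1)
     else if k = 3 then cmp 2 2 i (P 2) (P 2) else 0)"
  unfolding comp_comp_eq by (simp add: numeral_2_eq_2)

lemma part2:
  assumes P: "P \<in> comp_carrier C 2"
  shows "is_multiplication (comp_carrier C) (comp_comp cmp) P \<longleftrightarrow> compatible_multiplication C cmp (P 1) (P 2)"
proof -
  have P1: "P 1 \<in> C 2" and P2: "P 2 \<in> C 2" using P by (auto intro: carrierD)
  have "is_multiplication (comp_carrier C) (comp_comp cmp) P \<longleftrightarrow>
        (\<forall>k. comp_comp cmp 2 2 1 P P k = comp_comp cmp 2 2 2 P P k)"
    unfolding is_multiplication_def using P by (simp add: fun_eq_iff)
  also have "\<dots> \<longleftrightarrow> cmp 2 2 1 (P 1) (P 1) = cmp 2 2 2 (P 1) (P 1) \<and>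
      cmp 2 2 1 (P 1) (P 2) + cmp 2 2 1 (P 2) (P 1) = cmp 2 2 2 (P 1) (P 2) + cmp 2 2 2 (P 2) (P 1) \<and>
      cmp 2 2 1 (P 2) (P 2) = cmp 2 2 2 (P 2) (P 2)"
    unfolding comp22
    apply (intro iffI conjI allI)
       apply (drule spec[of _ 1], simp)
      apply (drule spec[of _ 2], simp)
     apply (drule spec[of _ 3], simp)
    apply simp
    done
  also have "\<dots> \<longleftrightarrow> compatible_multiplication C cmp (P 1) (P 2)"
    unfolding compatible_multiplication_def is_multiplication_def using P1 P2 by auto
  finally show ?thesis .
qed

end

theorem theorem3p3:
  fixes scale :: "'a::{comm_ring_1, ring_char_0} \<Rightarrow> 'b::ab_group_add \<Rightarrow> 'b"
    and C :: "nat \<Rightarrow> 'b set"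
    and cmp :: "nat \<Rightarrow> nat \<Rightarrow> nat \<Rightarrow> 'b \<Rightarrow> 'b \<Rightarrow> 'b"
    and u :: 'b
  assumes "ns_operad scale C cmp u"
  shows "ns_operad (comp_scale scale) (comp_carrier C) (comp_comp cmp) (comp_unit u) \<and>
         (\<forall>p \<in> comp_carrier C 2.
            is_multiplication (comp_carrier C) (comp_comp cmp) p
              \<longleftrightarrow> compatible_multiplication C cmp (p 1) (p 2))"
  using part1[OF assms] part2[OF assms] by blast

end
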